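(* Let $\mathcal{A}$ be a finite alphabet, $\Theta:\mathcal{A}^*\to\mathcal{A}^*$ an involutive antimorphism, and $\mathbf{u}\in\mathcal{A}^{\mathbb{N}}$ a recurrent infinite word with $D_\Theta(\mathbf{u})<+\infty$. Then the language of $\mathbf{u}$ is closed under $\Theta$, i.e., for every factor $w$ of $\mathbf{u}$, $\Theta(w)$ is also a factor of $\mathbf{u}$.
   Context: An involutive antimorphism on $\mathcal{A}^*$ is a map $\Theta$ with $\Theta^2=\mathrm{Id}$ and $\Theta(uv)=\Theta(v)\Theta(u)$ for all words $u,v$. A word $w$ is a $\Theta$-palindrome if $\Theta(w)=w$. For a finite word $w$, $\mathrm{Pal}_\Theta(w)$ is the set of distinct $\Theta$-palindromes occurring as factors of $w$ (including the empty word), and $G_\Theta(w)$ is the number of sets $\{a,\Theta(a)\}$ where $a$ is a letter occurring in $w$ with $a\neq\Theta(a)$. The $\Theta$-palindromic defect of a finite word is $D_\Theta(w)=|w|+1-G_\Theta(w)-\#\mathrm{Pal}_\Theta(w)$, and for an infinite word $\mathbf{u}$, $D_\Theta(\mathbf{u})=\sup\{D_\Theta(w): w \text{ a factor of } \mathbf{u}\}$. An infinite word is recurrent if each of its factors occurs in it infinitely many times. *)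

theory Defs
  imports Main
begin

definition inv_antimorphism :: "('a list \<Rightarrow> 'a list) \<Rightarrow> bool" where
  "inv_antimorphism \<Theta> \<longleftrightarrow> (\<forall>w. \<Theta> (\<Theta> w) = w) \<and> (\<forall>u v. \<Theta> (u @ v) = \<Theta> v @ \<Theta> u)"

definition is_factor :: "'a list \<Rightarrow> 'a list \<Rightarrow> bool" where
  "is_factor v w \<longleftrightarrow> (\<exists>p s. w = p @ v @ s)"

definition theta_pal_set :: "('a list \<Rightarrow> 'a list) \<Rightarrow> 'a list \<Rightarrow> 'a list set" where
  "theta_pal_set \<Theta> w = {v. is_factor v w \<and> \<Theta> v = v}"

definition G_theta :: "('a list \<Rightarrow> 'a list) \<Rightarrow> 'a list \<Rightarrow> nat" where
  "G_theta \<Theta> w = card {{[a], \<Theta> [a]} | a. a \<in> set w \<and> \<Theta> [a] \<noteq> [a]}"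

definition theta_defect :: "('a list \<Rightarrow> 'a list) \<Rightarrow> 'a list \<Rightarrow> int" where
  "theta_defect \<Theta> w = int (length w) + 1 - int (G_theta \<Theta> w) - int (card (theta_pal_set \<Theta> w))"

definition occurs_at :: "(nat \<Rightarrow> 'a) \<Rightarrow> 'a list \<Rightarrow> nat \<Rightarrow> bool" where
  "occurs_at u w i \<longleftrightarrow> w = map u [i..<i + length w]"

definition inf_factor :: "'a list \<Rightarrow> (nat \<Rightarrow> 'a) \<Rightarrow> bool" where
  "inf_factor w u \<longleftrightarrow> (\<exists>i. occurs_at u w i)"

definition recurrent :: "(nat \<Rightarrow> 'a) \<Rightarrow> bool" where
  "recurrent u \<longleftrightarrow> (\<forall>w. inf_factor w u \<longrightarrow> infinite {i. occurs_at u w i})"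

definition finite_theta_defect :: "('a list \<Rightarrow> 'a list) \<Rightarrow> (nat \<Rightarrow> 'a) \<Rightarrow> bool" where
  "finite_theta_defect \<Theta> u \<longleftrightarrow> (\<exists>B::int. \<forall>w. inf_factor w u \<longrightarrow> theta_defect \<Theta> w \<le> B)"

end

theory Submission
  imports Defs
begin

lemma theta_struct:
  assumes "inv_antimorphism \<Theta>"
  shows "\<exists>\<theta>. (\<forall>w. \<Theta> w = rev (map \<theta> w)) \<and> (\<forall>a. \<theta> (\<theta> a) = a)"
proof -
  have app: "\<And>u v. \<Theta> (u @ v) = \<Theta> v @ \<Theta> u" and inv: "\<And>w. \<Theta> (\<Theta> w) = w"
    using assms unfolding inv_antimorphism_def by auto
  have nil: "\<Theta> [] = []" using app[of "[]" "[]"] by simp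
  have ne: "\<Theta> [a] \<noteq> []" for a using inv[of "[a]"] nil by auto
  have ge: "length w \<le> length (\<Theta> w)" for w
  proof (induction w)
    case Nil then show ?case by simp
  next
    case (Cons x xs)
    have "\<Theta> (x # xs) = \<Theta> xs @ \<Theta> [x]" using app[of "[x]" xs] by simp
    then show ?case using Cons ne[of x] by (cases "\<Theta> [x]") auto
  qed
  have len: "length (\<Theta> w) = length w" for w
    using ge[of "\<Theta> w"] ge[of w] inv[of w] by simp
  define \<theta> where "\<theta> a = hd (\<Theta> [a])" for a
  have single: "\<Theta> [a] = [\<theta> a]" for a
    using len[of "[a]"] unfolding \<theta>_def by (cases "\<Theta> [a]") auto
  have rep: "\<Theta> w = rev (map \<theta> w)" for w
  proof (induction w)
    case Nil then show ?case by (simp add: nil)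
  next
    case (Cons x xs)
    have "\<Theta> (x # xs) = \<Theta> xs @ \<Theta> [x]" using app[of "[x]" xs] by simp
    then show ?case using Cons single[of x] by simp
  qed
  have "\<theta> (\<theta> a) = a" for a using inv[of "[a]"] single by simp
  then show ?thesis using rep by blast
qed

lemma fin_factors: "finite {v. is_factor v w}"
proof -
  have "{v. is_factor v w} \<subseteq> (\<lambda>(m,k). take k (drop m w)) ` ({..length w} \<times> {..length w})"
  proof
    fix v assume "v \<in> {v. is_factor v w}"
    then obtain p s where w: "w = p @ v @ s" unfolding is_factor_def by auto
    then have "v = (\<lambda>(m,k). take k (drop m w)) (length p, length v)" by simp
    moreover have "(length p, length v) \<in> {..length w} \<times> {..length w}" using w by simp
    ultimately show "v \<in> (\<lambda>(m,k). take k (drop m w)) ` ({..length w} \<times> {..length w})" by blast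
  qed
  then show ?thesis by (rule finite_subset) simp
qed

lemma fin_pal: "finite (theta_pal_set \<Theta> w)"
  unfolding theta_pal_set_def by (rule finite_subset[OF _ fin_factors[of w]]) auto

lemma factor_snoc:
  assumes "is_factor v (r @ [a])" "\<not> is_factor v r"
  shows "\<exists>x. r @ [a] = x @ v"
proof -
  obtain p s where e: "r @ [a] = p @ v @ s" using assms(1) unfolding is_factor_def by auto
  show ?thesis
  proof (cases s rule: rev_cases)
    case Nil then show ?thesis using e by auto
  next
    case (snoc s' b)
    then have "r = p @ v @ s'" using e by simp
    then show ?thesis using assms(2) unfolding is_factor_def by blast
  qed
qed

lemma factor_mono: "is_factor v r \<Longrightarrow> is_factor v (r @ t)"
  unfolding is_factor_def by (metis append.assoc)

lemma pal_mono: "theta_pal_set \<Theta> r \<subseteq> theta_pal_set \<Theta> (r @ [a])"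
  unfolding theta_pal_set_def using factor_mono by blast

lemma suffix_cmp:
  assumes "x1 @ P = x2 @ w"
  shows "(length P \<le> length w \<longrightarrow> (\<exists>y. w = y @ P)) \<and> (length w \<le> length P \<longrightarrow> (\<exists>y. P = y @ w))"
  using assms unfolding append_eq_append_conv2 by auto

lemma factor_empty: "is_factor [] r"
  unfolding is_factor_def by auto

lemma pal_new_le1:
  assumes th: "\<And>w. \<Theta> w = rev (map \<theta> w)"
  shows "card (theta_pal_set \<Theta> (r @ [a])) \<le> card (theta_pal_set \<Theta> r) + 1"
proof -
  let ?A = "theta_pal_set \<Theta> r" and ?B = "theta_pal_set \<Theta> (r @ [a])"
  have one: "card (?B - ?A) \<le> Suc 0"
  proof (subst card_le_Suc0_iff_eq)
    show "finite (?B - ?A)" using fin_pal by blast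
    show "\<forall>P1\<in>?B - ?A. \<forall>P2\<in>?B - ?A. P1 = P2"
    proof (intro ballI, rule ccontr)
      have key: "False" if "P1 \<in> ?B - ?A" "P2 \<in> ?B - ?A" and lt: "length P1 < length P2" for P1 P2
      proof -
        have p1: "\<Theta> P1 = P1" "is_factor P1 (r@[a])" "\<not> is_factor P1 r"
          and p2: "\<Theta> P2 = P2" "is_factor P2 (r@[a])" "\<not> is_factor P2 r"
          using that unfolding theta_pal_set_def by auto
        obtain x1 where x1: "r @ [a] = x1 @ P1" using factor_snoc[OF p1(2,3)] by blast
        obtain x2 where x2: "r @ [a] = x2 @ P2" using factor_snoc[OF p2(2,3)] by blast
        have "x2 @ P2 = x1 @ P1" using x1 x2 by simp
        then obtain y where y: "P2 = y @ P1" using suffix_cmp[of x2 P2 x1 P1] lt by auto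
        have yne: "y \<noteq> []" using y lt by auto
        have "P2 = P1 @ \<Theta> y" using p1(1) p2(1) y th by simp
        then have "r @ [a] = x2 @ P1 @ \<Theta> y" using x2 by simp
        moreover have "\<Theta> y \<noteq> []" using yne th by simp
        ultimately have "butlast (r @ [a]) = butlast (x2 @ P1 @ \<Theta> y)" by simp
        then have "r = x2 @ P1 @ butlast (\<Theta> y)" using \<open>\<Theta> y \<noteq> []\<close>
          by (simp add: butlast_append)
        then show False using p1(3) unfolding is_factor_def by blast
      qed
      fix P1 P2 assume "P1 \<in> ?B - ?A" "P2 \<in> ?B - ?A" "P1 \<noteq> P2"
      moreover have "length P1 \<noteq> length P2"
      proof
        assume l: "length P1 = length P2"
        obtain x1 where "r @ [a] = x1 @ P1" using factor_snoc[of P1 r a] \<open>P1 \<in> ?B - ?A\<close>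
          unfolding theta_pal_set_def by auto
        moreover obtain x2 where "r @ [a] = x2 @ P2" using factor_snoc[of P2 r a] \<open>P2 \<in> ?B - ?A\<close>
          unfolding theta_pal_set_def by auto
        ultimately show False using suffix_cmp[of x1 P1 x2 P2] l \<open>P1 \<noteq> P2\<close> by auto
      qed
      ultimately show False using key[of P1 P2] key[of P2 P1] by linarith
    qed
  qed
  have "?B \<subseteq> ?A \<union> (?B - ?A)" by blast
  then have "card ?B \<le> card (?A \<union> (?B - ?A))" using fin_pal by (intro card_mono) auto
  also have "\<dots> \<le> card ?A + card (?B - ?A)" by (rule card_Un_le)
  finally show ?thesis using one by simp
qed


definition GS :: "('a list \<Rightarrow> 'a list) \<Rightarrow> 'a list \<Rightarrow> 'a list set set" where
  "GS \<Theta> w = {{[a], \<Theta> [a]} | a. a \<in> set w \<and> \<Theta> [a] \<noteq> [a]}"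

lemma GS_fin: "finite (GS \<Theta> w)"
proof -
  have "GS \<Theta> w = (\<lambda>a. {[a], \<Theta> [a]}) ` {a \<in> set w. \<Theta> [a] \<noteq> [a]}"
    unfolding GS_def by blast
  then show ?thesis by simp
qed

lemma GS_snoc: "GS \<Theta> (r @ [a]) = (if \<Theta> [a] \<noteq> [a] then insert {[a], \<Theta> [a]} (GS \<Theta> r) else GS \<Theta> r)"
  unfolding GS_def by auto

lemma G_eq: "G_theta \<Theta> w = card (GS \<Theta> w)"
  unfolding G_theta_def GS_def by simp

lemma no_new_pal:
  assumes th: "\<And>w. \<Theta> w = rev (map \<theta> w)" "\<And>a. \<theta> (\<theta> a) = a"
    and ne: "\<Theta> [a] \<noteq> [a]" and notin: "{[a], \<Theta> [a]} \<notin> GS \<Theta> r"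
  shows "theta_pal_set \<Theta> (r @ [a]) \<subseteq> theta_pal_set \<Theta> r"
proof
  fix P assume P: "P \<in> theta_pal_set \<Theta> (r @ [a])"
  show "P \<in> theta_pal_set \<Theta> r"
  proof (rule ccontr)
    assume nP: "P \<notin> theta_pal_set \<Theta> r"
    have pal: "\<Theta> P = P" and f: "is_factor P (r @ [a])" and nf: "\<not> is_factor P r"
      using P nP unfolding theta_pal_set_def by auto
    obtain x where x: "r @ [a] = x @ P" using factor_snoc[OF f nf] by blast
    have "P \<noteq> []" using nf factor_empty by auto
    then obtain c Q where PQ: "P = c # Q" by (cases P) auto
    have ta: "\<theta> a \<noteq> a" using ne th by simp
    show False
    proof (cases "Q = []")
      case True
      then have "P = [a]" using x PQ by simp
      then show False using pal ne by simp
    next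
      case False
      have lastP: "last P = a" using x \<open>P \<noteq> []\<close> by (metis last_appendR last_snoc)
      have "hd (rev (map \<theta> P)) = \<theta> (last P)" using \<open>P \<noteq> []\<close> by (simp add: hd_rev last_map)
      then have "hd P = \<theta> a" using pal th(1)[of P] lastP by metis
      then have "c = \<theta> a" using PQ by simp
      have "butlast (r @ [a]) = butlast (x @ c # Q)" using x PQ by simp
      then have "r = x @ c # butlast Q" using False by (simp add: butlast_append)
      then have cin: "\<theta> a \<in> set r" using \<open>c = \<theta> a\<close> by simp
      have "\<Theta> [\<theta> a] = [a]" using th by simp
      then have "{[\<theta> a], \<Theta> [\<theta> a]} \<in> GS \<Theta> r" using cin ta unfolding GS_def by auto
      moreover have "{[\<theta> a], \<Theta> [\<theta> a]} = {[a], \<Theta> [a]}" using th by auto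
      ultimately show False using notin by simp
    qed
  qed
qed

lemma step:
  assumes th: "\<And>w. \<Theta> w = rev (map \<theta> w)" "\<And>a. \<theta> (\<theta> a) = a"
  shows "theta_defect \<Theta> r \<le> theta_defect \<Theta> (r @ [a])"
proof (cases "\<Theta> [a] \<noteq> [a] \<and> {[a], \<Theta> [a]} \<notin> GS \<Theta> r")
  case True
  have "card (theta_pal_set \<Theta> (r @ [a])) \<le> card (theta_pal_set \<Theta> r)"
    using no_new_pal[OF th, of a r] True fin_pal[of \<Theta> r] by (intro card_mono) simp_all
  moreover have "G_theta \<Theta> (r @ [a]) = G_theta \<Theta> r + 1"
  proof -
    have "GS \<Theta> (r @ [a]) = insert {[a], \<Theta> [a]} (GS \<Theta> r)" using True GS_snoc[of \<Theta> r a] by simp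
    then show ?thesis using True GS_fin[of \<Theta> r] by (simp add: G_eq)
  qed
  ultimately show ?thesis unfolding theta_defect_def by simp
next
  case False
  then have "GS \<Theta> (r @ [a]) = GS \<Theta> r"
    using GS_snoc[of \<Theta> r a] by (cases "\<Theta> [a] = [a]") (simp_all add: insert_absorb)
  then have "G_theta \<Theta> (r @ [a]) = G_theta \<Theta> r" by (simp add: G_eq)
  then show ?thesis using pal_new_le1[OF th(1), of r a] unfolding theta_defect_def by simp
qed

lemma step_eq:
  assumes th: "\<And>w. \<Theta> w = rev (map \<theta> w)" "\<And>a. \<theta> (\<theta> a) = a"
    and ain: "a \<in> set r" and eq: "theta_defect \<Theta> (r @ [a]) = theta_defect \<Theta> r"
  shows "\<exists>P. \<Theta> P = P \<and> is_factor P (r @ [a]) \<and> \<not> is_factor P r"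
proof (rule ccontr)
  assume na: "\<not> ?thesis"
  have "theta_pal_set \<Theta> (r @ [a]) \<subseteq> theta_pal_set \<Theta> r"
  proof
    fix P assume "P \<in> theta_pal_set \<Theta> (r @ [a])"
    then have "\<Theta> P = P" "is_factor P (r @ [a])" unfolding theta_pal_set_def by simp_all
    moreover have "\<not> (\<Theta> P = P \<and> is_factor P (r @ [a]) \<and> \<not> is_factor P r)"
      using na by (intro notI) (erule notE, rule exI)
    ultimately have "is_factor P r" by simp
    then show "P \<in> theta_pal_set \<Theta> r" using \<open>\<Theta> P = P\<close> unfolding theta_pal_set_def by simp
  qed
  then have "theta_pal_set \<Theta> (r @ [a]) = theta_pal_set \<Theta> r" by (rule subset_antisym[OF _ pal_mono])
  moreover have "G_theta \<Theta> (r @ [a]) = G_theta \<Theta> r"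
  proof -
    have "\<Theta> [a] \<noteq> [a] \<Longrightarrow> {[a], \<Theta> [a]} \<in> GS \<Theta> r" using ain unfolding GS_def by blast
    then have "GS \<Theta> (r @ [a]) = GS \<Theta> r" using GS_snoc[of \<Theta> r a] by (simp add: insert_absorb)
    then show ?thesis by (simp add: G_eq)
  qed
  ultimately show False using eq unfolding theta_defect_def by simp
qed


lemma inf_unb: "infinite (S::nat set) \<Longrightarrow> \<exists>n\<ge>m. n \<in> S"
proof (rule ccontr)
  assume "infinite S" "\<not> (\<exists>n\<ge>m. n \<in> S)"
  then have "S \<subseteq> {..<m}" by (auto simp: not_le)
  then show False using \<open>infinite S\<close> finite_subset by blast
qed

lemma prefix_factor:
  assumes "is_factor v (map u [0..<n])"
  shows "inf_factor v u"
proof -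
  obtain p s where e: "map u [0..<n] = p @ v @ s" using assms unfolding is_factor_def by auto
  have len: "length p + length v \<le> n" using arg_cong[OF e, of length] by simp
  have "v = take (length v) (drop (length p) (map u [0..<n]))" using e by simp
  also have "\<dots> = map u [length p..<length p + length v]"
    using len by (simp add: drop_map take_map)
  finally show ?thesis unfolding inf_factor_def occurs_at_def by blast
qed

lemma pre_split: "k \<le> n \<Longrightarrow> map u [0..<n] = map u [0..<k] @ map u [k..<n]"
  by (metis map_append upt_add_eq_append zero_le le_add_diff_inverse)

lemma occ_split: "occurs_at u w i \<Longrightarrow> map u [0..<i + length w] = map u [0..<i] @ w"
  unfolding occurs_at_def using pre_split[of i "i + length w" u] by simp

theorem lemma1:
  fixes \<Theta> :: "('a::finite) list \<Rightarrow> 'a list" and u :: "nat \<Rightarrow> 'a"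
  assumes "inv_antimorphism \<Theta>"
    and "recurrent u"
    and "finite_theta_defect \<Theta> u"
  shows "\<forall>w. inf_factor w u \<longrightarrow> inf_factor (\<Theta> w) u"
proof -
  obtain \<theta> where th1: "\<And>w. \<Theta> w = rev (map \<theta> w)" and th2: "\<And>a. \<theta> (\<theta> a) = a"
    using theta_struct[OF assms(1)] by blast
  obtain B where B: "\<And>w. inf_factor w u \<Longrightarrow> theta_defect \<Theta> w \<le> B"
    using assms(3) unfolding finite_theta_defect_def by blast
  define f where "f n = theta_defect \<Theta> (map u [0..<n])" for n
  have fS: "f n \<le> f (Suc n)" for n
    unfolding f_def using step[OF th1 th2, of "map u [0..<n]" "u n"] by simp
  have fB: "f n \<le> B" for n
  proof -
    have "inf_factor (map u [0..<n]) u" unfolding inf_factor_def occurs_at_def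
      by (rule exI[of _ 0]) simp
    then show ?thesis unfolding f_def by (rule B)
  qed
  have fmono: "n \<le> m \<Longrightarrow> f n \<le> f m" for n m
    by (rule lift_Suc_mono_le[of f, OF fS])
  have fin: "finite (range f)"
  proof (rule finite_subset)
    show "range f \<subseteq> {f 0..B}" using fB fmono by auto
  qed simp
  define M where "M = Max (range f)"
  have "M \<in> range f" unfolding M_def using fin by (intro Max_in) auto
  then obtain N where fN: "f N = M" by auto
  have const: "f (Suc n) = f n" if "n \<ge> N" for n
  proof -
    have "f (Suc n) \<le> M" "f n \<le> M" unfolding M_def using fin by auto
    moreover have "f N \<le> f n" using fmono that by simp
    ultimately show ?thesis using fS[of n] fN by simp
  qed
  show ?thesis
  proof (intro allI impI)
    fix w assume wf: "inf_factor w u"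
    show "inf_factor (\<Theta> w) u"
    proof (cases "w = []")
      case True
      then have "\<Theta> w = []" using th1 by simp
      then show ?thesis unfolding inf_factor_def occurs_at_def by simp
    next
      case False
      define L where "L = length w"
      have inf: "infinite {i. occurs_at u w i}" using assms(2) wf unfolding recurrent_def by blast
      then obtain i where i: "i \<ge> N" "occurs_at u w i"
        using inf_unb[of _ N] by blast
      obtain j where j: "j \<ge> Suc i" "occurs_at u w j"
        using inf_unb[OF inf, of "Suc i"] by blast
      have LL: "L \<ge> 1" using False unfolding L_def by (cases w) auto
      define n where "n = j + L - 1"
      have nS: "Suc n = j + L" unfolding n_def using LL by simp
      define r where "r = map u [0..<n]"
      have ra0: "r @ [u n] = map u [0..<Suc n]" unfolding r_def by simp
      have ra: "r @ [u n] = map u [0..<j] @ w"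
        using ra0 occ_split[OF j(2), folded L_def] nS by simp
      have eqf: "f (Suc n) = f n" using const[of n] i j n_def LL by simp
      have ej: "w = map u [j..<j + L]" using j(2) unfolding occurs_at_def L_def .
      have ei: "w = map u [i..<i + L]" using i(2) unfolding occurs_at_def L_def .
      have wl1: "w ! (L - 1) = u (j + L - 1)"
      proof -
        have "map u [j..<j + L] ! (L - 1) = u (j + (L - 1))" using LL by simp
        then show ?thesis using ej LL by simp
      qed
      have wl2: "w ! (L - 1) = u (i + L - 1)"
      proof -
        have "map u [i..<i + L] ! (L - 1) = u (i + (L - 1))" using LL by simp
        then show ?thesis using ei LL by simp
      qed
      have ain: "u n \<in> set r"
      proof -
        have "i + L - 1 < n" using j LL unfolding n_def by simp
        then have "u (i + L - 1) \<in> set r" unfolding r_def by simp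
        then show ?thesis using wl1 wl2 n_def by simp
      qed
      have "theta_defect \<Theta> (r @ [u n]) = theta_defect \<Theta> r"
        using eqf unfolding f_def r_def by simp
      then obtain P where P: "\<Theta> P = P" "is_factor P (r @ [u n])" "\<not> is_factor P r"
        using step_eq[OF th1 th2 ain] by blast
      obtain x where x: "r @ [u n] = x @ P" using factor_snoc[OF P(2,3)] by blast
      have xw: "x @ P = map u [0..<j] @ w" using x ra by simp
      show ?thesis
      proof (cases "length P \<le> L")
        case True
        then obtain y where y: "w = y @ P" using suffix_cmp[OF xw] unfolding L_def by blast
        have "i + L \<le> n" using j LL unfolding n_def by simp
        then have "r = map u [0..<i + L] @ map u [i + L..<n]"
          unfolding r_def by (rule pre_split)
        also have "\<dots> = (map u [0..<i] @ y) @ P @ map u [i + L..<n]"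
          using occ_split[OF i(2), folded L_def] y by simp
        finally have "is_factor P r" unfolding is_factor_def by blast
        then show ?thesis using P(3) by simp
      next
        case False
        then obtain y where y: "P = y @ w" using suffix_cmp[OF xw] unfolding L_def by auto
        have "P = \<Theta> w @ \<Theta> y" using P(1) y th1 by simp
        then have "map u [0..<Suc n] = x @ \<Theta> w @ \<Theta> y" using x unfolding r_def by simp
        then have "is_factor (\<Theta> w) (map u [0..<Suc n])" unfolding is_factor_def by blast
        then show ?thesis by (rule prefix_factor)
      qed
    qed
  qed
qed

end
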